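(* Let $k$ be any field of characteristic $0$ (in particular $k=\mathbb R$), and let $\mathfrak m=\mathfrak m_{-1}\oplus\mathfrak m_{-2}$ be a non-degenerate graded nilpotent Lie algebra of depth $2$ over $k$, generated by $\mathfrak m_{-1}$, with $\dim\mathfrak m_{-2}=2$. Then the Tanaka prolongation of $\mathfrak m$ is infinite-dimensional.
   Context: A GNLA is a negatively graded Lie algebra $\mathfrak m=\bigoplus_{i\ge1}\mathfrak m_{-i}$ generated by $\mathfrak m_{-1}$; non-degenerate means $\mathfrak m_{-1}$ contains no non-zero central element. The Tanaka prolongation $\mathfrak g(\mathfrak m)$ is defined by $\mathfrak g_i(\mathfrak m)=\mathfrak m_i$ for $i<0$ and recursively, for $k\ge0$, $\mathfrak g_k(\mathfrak m)=\{\phi:\mathfrak m\to\bigoplus_{i<k}\mathfrak g_i(\mathfrak m)\text{ linear}\mid \phi(\mathfrak m_{-i})\subset\mathfrak g_{k-i}(\mathfrak m),\ \phi([x,y])=[\phi(x),y]+[x,\phi(y)]\ \forall x,y\in\mathfrak m\}$. *)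

theory Defs
  imports Complex_Main "HOL-Library.Function_Algebras"
begin

text \<open>A grading m = m_{-1} (+) m_{-2} is given by two
subspaces M1, M2.\<close>

definition is_lie_algebra :: "('k::field \<Rightarrow> 'a::ab_group_add \<Rightarrow> 'a) \<Rightarrow> ('a \<Rightarrow> 'a \<Rightarrow> 'a) \<Rightarrow> bool" where
  "is_lie_algebra sc br \<longleftrightarrow>
     vector_space sc \<and>
     (\<forall>x y z. br (x + y) z = br x z + br y z) \<and>
     (\<forall>x y z. br x (y + z) = br x y + br x z) \<and>
     (\<forall>c x y. br (sc c x) y = sc c (br x y)) \<and>
     (\<forall>c x y. br x (sc c y) = sc c (br x y)) \<and>
     (\<forall>x. br x x = 0) \<and>
     (\<forall>x y z. br x (br y z) + br y (br z x) + br z (br x y) = 0)"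

definition finite_dim :: "('k::field \<Rightarrow> 'a::ab_group_add \<Rightarrow> 'a) \<Rightarrow> bool" where
  "finite_dim sc \<longleftrightarrow> (\<exists>B. finite B \<and> module.span sc B = UNIV)"

definition depth2_gnla ::
  "('k::field \<Rightarrow> 'a::ab_group_add \<Rightarrow> 'a) \<Rightarrow> ('a \<Rightarrow> 'a \<Rightarrow> 'a) \<Rightarrow> 'a set \<Rightarrow> 'a set \<Rightarrow> bool" where
  "depth2_gnla sc br M1 M2 \<longleftrightarrow>
     is_lie_algebra sc br \<and> finite_dim sc \<and>
     module.subspace sc M1 \<and> module.subspace sc M2 \<and>
     M1 \<inter> M2 = {0} \<and> (\<forall>x. \<exists>a\<in>M1. \<exists>b\<in>M2. x = a + b) \<and>
     (\<forall>x\<in>M1. \<forall>y\<in>M1. br x y \<in> M2) \<and>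
     (\<forall>x\<in>M1. \<forall>y\<in>M2. br x y = 0) \<and>
     (\<forall>x\<in>M2. \<forall>y\<in>M2. br x y = 0) \<and>
     (\<forall>S. module.subspace sc S \<and> M1 \<subseteq> S \<and> (\<forall>x\<in>S. \<forall>y\<in>S. br x y \<in> S) \<longrightarrow> S = UNIV)"

definition non_degenerate :: "('a::zero \<Rightarrow> 'a \<Rightarrow> 'a) \<Rightarrow> 'a set \<Rightarrow> bool" where
  "non_degenerate br M1 \<longleftrightarrow> (\<forall>x\<in>M1. (\<forall>y. br x y = 0) \<longrightarrow> x = 0)"

text \<open>Every element u of g_d (any degree d)
is represented by the function  xs = [x1,...,xr]  \<mapsto>  the m-component of
[...[[u,x1],x2],...,xr].  For u in m this is the iterated bracket (adl); for
u = phi in g_d, d \<ge> 0, it is F [] = 0 and F (x # xs) = (representation of phi x) xs.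
This is an injective linear embedding of the direct sum of the g_d into 'a list \<Rightarrow> 'a.\<close>

fun adl :: "('a \<Rightarrow> 'a \<Rightarrow> 'a) \<Rightarrow> 'a \<Rightarrow> 'a list \<Rightarrow> 'a" where
  "adl br a [] = a"
| "adl br a (x # xs) = adl br (br a x) xs"

text \<open>tanaka sc br M1 M2 n is (the representation of) g_{n-2}(m).\<close>

fun tanaka :: "('k \<Rightarrow> 'a::ab_group_add \<Rightarrow> 'a) \<Rightarrow> ('a \<Rightarrow> 'a \<Rightarrow> 'a) \<Rightarrow> 'a set \<Rightarrow> 'a set \<Rightarrow> nat
               \<Rightarrow> ('a list \<Rightarrow> 'a) set" where
  "tanaka sc br M1 M2 0 = {adl br a | a. a \<in> M2}"
| "tanaka sc br M1 M2 (Suc 0) = {adl br a | a. a \<in> M1}"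
| "tanaka sc br M1 M2 (Suc (Suc n)) =
     {F. F [] = 0 \<and>
         (\<forall>x y xs. F ((x + y) # xs) = F (x # xs) + F (y # xs)) \<and>
         (\<forall>c x xs. F (sc c x # xs) = sc c (F (x # xs))) \<and>
         (\<forall>x\<in>M1. (\<lambda>xs. F (x # xs)) \<in> tanaka sc br M1 M2 (Suc n)) \<and>
         (\<forall>x\<in>M2. (\<lambda>xs. F (x # xs)) \<in> tanaka sc br M1 M2 n) \<and>
         (\<forall>x y xs. F (br x y # xs) = F (x # y # xs) - F (y # x # xs))}"

definition scale_fun :: "('k \<Rightarrow> 'a \<Rightarrow> 'a) \<Rightarrow> 'k \<Rightarrow> ('b \<Rightarrow> 'a) \<Rightarrow> ('b \<Rightarrow> 'a)" where
  "scale_fun sc c F = (\<lambda>xs. sc c (F xs))"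

text \<open>The full Tanaka prolongation g(m) = (+)_d g_d (degrees below -2 are zero).\<close>

definition tanaka_prolongation :: "('k::field \<Rightarrow> 'a::ab_group_add \<Rightarrow> 'a) \<Rightarrow> ('a \<Rightarrow> 'a \<Rightarrow> 'a) \<Rightarrow> 'a set \<Rightarrow> 'a set
               \<Rightarrow> ('a list \<Rightarrow> 'a) set" where
  "tanaka_prolongation sc br M1 M2 = module.span (scale_fun sc) (\<Union>n. tanaka sc br M1 M2 n)"

definition infinite_dimensional :: "('k::field \<Rightarrow> 'b::ab_group_add \<Rightarrow> 'b) \<Rightarrow> 'b set \<Rightarrow> bool" where
  "infinite_dimensional sc V \<longleftrightarrow> \<not> (\<exists>B. finite B \<and> V \<subseteq> module.span sc B)"

end

theory Submission imports Defs begin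

locale setting =
  fixes sc :: "'k::field_char_0 \<Rightarrow> 'a::ab_group_add \<Rightarrow> 'a"
    and br :: "'a \<Rightarrow> 'a \<Rightarrow> 'a"
    and M1 M2 :: "'a set"
  assumes gnla: "depth2_gnla sc br M1 M2"
    and nd: "non_degenerate br M1"
    and dim2: "vector_space.dim sc M2 = 2"
begin

lemma lie: "is_lie_algebra sc br" using gnla by (simp add: depth2_gnla_def)

lemma vs: "vector_space sc" using lie by (simp add: is_lie_algebra_def)

definition "Bas = (SOME B. finite B \<and> \<not> module.dependent sc B \<and> module.span sc B = UNIV)"

lemma Bas: "finite Bas \<and> \<not> module.dependent sc Bas \<and> module.span sc Bas = UNIV"
proof -
  interpret vector_space sc by (rule vs)
  obtain B0 where B0: "finite B0" "span B0 = UNIV" using gnla by (auto simp: depth2_gnla_def finite_dim_def)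
  obtain B where B: "B \<subseteq> UNIV" "independent B" "UNIV \<subseteq> span B" "card B = dim UNIV"
    using basis_exists by blast
  have "finite B" using independent_span_bound[OF B0(1) B(2)] B0(2) by auto
  hence "\<exists>B. finite B \<and> independent B \<and> span B = UNIV" using B by auto
  thus ?thesis unfolding Bas_def by (rule someI_ex)
qed

sublocale finite_dimensional_vector_space sc Bas
  by (rule finite_dimensional_vector_space.intro[OF vs]) (unfold_locales, use Bas in auto)

lemma br_add_l: "br (x + y) z = br x z + br y z" using lie by (simp add: is_lie_algebra_def)
lemma br_add_r: "br x (y + z) = br x y + br x z" using lie by (simp add: is_lie_algebra_def)
lemma br_scale_l: "br (sc c x) y = sc c (br x y)" using lie by (simp add: is_lie_algebra_def)
lemma br_scale_r: "br x (sc c y) = sc c (br x y)" using lie by (simp add: is_lie_algebra_def)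
lemma br_self: "br x x = 0" using lie by (simp add: is_lie_algebra_def)

lemma br_zero_l[simp]: "br 0 y = 0"
  using br_add_l[of 0 0 y] by simp
lemma br_zero_r[simp]: "br y 0 = 0"
  using br_add_r[of y 0 0] by simp
lemma br_skew: "br x y = - br y x"
proof -
  have "0 = br (x + y) (x + y)" by (simp add: br_self)
  also have "\<dots> = br x y + br y x" by (simp only: br_add_l br_add_r) (simp add: br_self)
  finally have "br x y + br y x = 0" by (rule sym)
  thus ?thesis by (simp add: eq_neg_iff_add_eq_0)
qed

lemma sub1: "subspace M1" and sub2: "subspace M2" and M12: "M1 \<inter> M2 = {0}"
  and dec: "\<exists>a\<in>M1. \<exists>b\<in>M2. x = a + b"
  and b11: "x \<in> M1 \<Longrightarrow> y \<in> M1 \<Longrightarrow> br x y \<in> M2"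
  and b12: "x \<in> M1 \<Longrightarrow> y \<in> M2 \<Longrightarrow> br x y = 0"
  and b22: "x \<in> M2 \<Longrightarrow> y \<in> M2 \<Longrightarrow> br x y = 0"
  using gnla by (auto simp: depth2_gnla_def)

lemma b21: "x \<in> M2 \<Longrightarrow> y \<in> M1 \<Longrightarrow> br x y = 0"
  using b12 br_skew by (metis neg_equal_0_iff_equal)

lemma central_l: "z \<in> M2 \<Longrightarrow> br z y = 0"
proof -
  assume z: "z \<in> M2"
  obtain a b where "a \<in> M1" "b \<in> M2" "y = a + b" using dec by blast
  thus ?thesis using z by (simp add: br_add_r b21 b22)
qed

lemma central_r: "z \<in> M2 \<Longrightarrow> br y z = 0"
  using central_l br_skew by (metis neg_equal_0_iff_equal)

lemma br_M2: "br x y \<in> M2"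
proof -
  obtain a b where ab: "a \<in> M1" "b \<in> M2" "x = a + b" using dec by blast
  obtain c d where cd: "c \<in> M1" "d \<in> M2" "y = c + d" using dec by blast
  have "br x y = br a c" using ab cd by (simp add: br_add_l br_add_r central_l central_r)
  thus ?thesis using ab cd b11 by simp
qed

lemma br_M1_M2: "u \<in> M1 \<Longrightarrow> z \<in> M2 \<Longrightarrow> br u z = 0" by (rule b12)


lemma adl_add: "adl br (a + b) xs = adl br a xs + adl br b xs"
  by (induction xs arbitrary: a b) (simp_all add: br_add_l)
lemma adl_scale: "adl br (sc c a) xs = sc c (adl br a xs)"
  by (induction xs arbitrary: a) (simp_all add: br_scale_l)
lemma adl_zero[simp]: "adl br 0 xs = 0"
  by (induction xs) simp_all
lemma adl_M2: "a \<in> M2 \<Longrightarrow> xs \<noteq> [] \<Longrightarrow> adl br a xs = 0"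
  by (cases xs) (simp_all add: central_l)
lemma adl_M1: "a \<in> M1 \<Longrightarrow> length xs \<ge> 2 \<Longrightarrow> adl br a xs = 0"
proof (cases xs)
  case (Cons x ys)
  assume "a \<in> M1" "length xs \<ge> 2"
  then have "ys \<noteq> []" "br a x \<in> M2" using Cons br_M2 by auto
  then show ?thesis using Cons adl_M2 by simp
qed simp

lemma zero_tanaka: "(\<lambda>_. 0) \<in> tanaka sc br M1 M2 n"
proof (induction n rule: less_induct)
  case (less n)
  show ?case
  proof (cases n)
    case 0
    then show ?thesis using subspace_0[OF sub2] by (auto intro!: exI[of _ 0])
  next
    case (Suc m)
    show ?thesis
    proof (cases m)
      case 0
      then show ?thesis using Suc subspace_0[OF sub1] by (auto intro!: exI[of _ 0])
    next
      case (Suc k)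
      have a: "(\<lambda>_. 0) \<in> tanaka sc br M1 M2 (Suc k)" "(\<lambda>_. 0) \<in> tanaka sc br M1 M2 k"
        using less \<open>n = Suc m\<close> Suc by auto
      show ?thesis using \<open>n = Suc m\<close> Suc a by simp
    qed
  qed
qed

definition good :: "'a set \<Rightarrow> ('a \<Rightarrow> 'a \<Rightarrow> 'a) \<Rightarrow> bool" where
  "good U T \<longleftrightarrow> subspace U \<and> U \<subseteq> M1 \<and> (\<forall>u\<in>U. \<forall>x. T x u \<in> U) \<and>
     (\<forall>u\<in>U. \<forall>v\<in>U. \<forall>x. T x (u + v) = T x u + T x v) \<and>
     (\<forall>u\<in>U. \<forall>c x. T x (sc c u) = sc c (T x u)) \<and>
     (\<forall>u\<in>U. \<forall>x y. T (x + y) u = T x u + T y u) \<and>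
     (\<forall>u\<in>U. \<forall>c x. T (sc c x) u = sc c (T x u)) \<and>
     (\<forall>u\<in>U. \<forall>x\<in>M2. T x u = 0) \<and>
     (\<forall>u\<in>U. \<forall>x y. T x (T y u) = T y (T x u)) \<and>
     (\<forall>u\<in>U. \<forall>x y. br (T x u) y = br (T y u) x) \<and>
     (\<exists>x0 u0. u0 \<in> U \<and> (\<forall>n. (T x0 ^^ n) u0 \<noteq> 0))"

fun chain :: "('a \<Rightarrow> 'a \<Rightarrow> 'a) \<Rightarrow> nat \<Rightarrow> 'a \<Rightarrow> 'a list \<Rightarrow> 'a" where
  "chain T 0 u xs = adl br u xs"
| "chain T (Suc n) u [] = 0"
| "chain T (Suc n) u (x # ys) = chain T n (T x u) ys"

context
  fixes U T assumes g: "good U T"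
begin

lemma gU: "subspace U" "U \<subseteq> M1" "u \<in> U \<Longrightarrow> T x u \<in> U"
  "u \<in> U \<Longrightarrow> v \<in> U \<Longrightarrow> T x (u + v) = T x u + T x v"
  "u \<in> U \<Longrightarrow> T x (sc c u) = sc c (T x u)"
  "u \<in> U \<Longrightarrow> T (x + y) u = T x u + T y u"
  "u \<in> U \<Longrightarrow> T (sc c x) u = sc c (T x u)"
  "u \<in> U \<Longrightarrow> z \<in> M2 \<Longrightarrow> T z u = 0"
  "u \<in> U \<Longrightarrow> T x (T y u) = T y (T x u)"
  "u \<in> U \<Longrightarrow> br (T x u) y = br (T y u) x"
  using g unfolding good_def by simp_all

lemma T0: "T x 0 = 0"
  using gU(4)[of 0 0 x] subspace_0[OF gU(1)] by simp

lemma chain_add: "u \<in> U \<Longrightarrow> v \<in> U \<Longrightarrow> chain T n (u + v) xs = chain T n u xs + chain T n v xs"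
proof (induction n arbitrary: u v xs)
  case 0 then show ?case by (simp add: adl_add)
next
  case (Suc n) then show ?case by (cases xs) (simp_all add: gU)
qed

lemma chain_scale: "u \<in> U \<Longrightarrow> chain T n (sc c u) xs = sc c (chain T n u xs)"
proof (induction n arbitrary: u xs)
  case 0 then show ?case by (simp add: adl_scale)
next
  case (Suc n) then show ?case by (cases xs) (simp_all add: gU)
qed

lemma chain_zero: "chain T n 0 xs = 0"
proof (induction n arbitrary: xs)
  case 0 then show ?case by simp
next
  case (Suc n) then show ?case by (cases xs) (simp_all add: T0)
qed

lemma chain_tanaka: "u \<in> U \<Longrightarrow> chain T n u \<in> tanaka sc br M1 M2 (Suc n)"
proof (induction n arbitrary: u)
  case 0
  then show ?case using gU(2) by (auto simp: fun_eq_iff)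
next
  case (Suc n)
  have z: "chain T n 0 = (\<lambda>_. 0)" by (simp add: fun_eq_iff chain_zero)
  have e: "(\<lambda>xs. chain T n (T x u) xs) = chain T n (T x u)" for x by simp
  have d: "chain T n (T x u) (y # xs) = chain T n (T y u) (x # xs)" for x y xs
  proof (cases n)
    case 0 then show ?thesis using gU(10)[OF Suc.prems] by simp
  next
    case (Suc m) then show ?thesis using gU(9)[OF Suc.prems] by simp
  qed
  show ?case unfolding tanaka.simps mem_Collect_eq
  proof (intro conjI allI ballI)
    show "chain T (Suc n) u [] = 0" by simp
    show "chain T (Suc n) u ((x + y) # xs) = chain T (Suc n) u (x # xs) + chain T (Suc n) u (y # xs)" for x y xs
      using Suc.prems by (simp add: gU chain_add)
    show "chain T (Suc n) u (sc c x # xs) = sc c (chain T (Suc n) u (x # xs))" for c x xs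
      using Suc.prems by (simp add: gU chain_scale)
    show "(\<lambda>xs. chain T (Suc n) u (x # xs)) \<in> tanaka sc br M1 M2 (Suc n)" if "x \<in> M1" for x
      using Suc.IH[of "T x u"] Suc.prems gU(3) by simp
    show "(\<lambda>xs. chain T (Suc n) u (x # xs)) \<in> tanaka sc br M1 M2 n" if "x \<in> M2" for x
      using gU(8)[OF Suc.prems that] z zero_tanaka by simp
    show "chain T (Suc n) u (br x y # xs) = chain T (Suc n) u (x # y # xs) - chain T (Suc n) u (y # x # xs)" for x y xs
      using gU(8)[OF Suc.prems br_M2] d[of x y xs] by (simp add: chain_zero)
  qed
qed

lemma chain_support: "u \<in> U \<Longrightarrow> length xs \<noteq> n \<Longrightarrow> length xs \<noteq> Suc n \<Longrightarrow> chain T n u xs = 0"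
proof (induction n arbitrary: u xs)
  case 0
  then have "2 \<le> length xs" by linarith
  then show ?case using adl_M1[of u xs] gU(2) 0 by auto
next
  case (Suc n) then show ?case by (cases xs) (simp_all add: gU)
qed

lemma chain_eval: "chain T n u (replicate n x) = (T x ^^ n) u"
proof (induction n arbitrary: u)
  case 0 then show ?case by simp
next
  case (Suc n) then show ?case by (simp add: funpow_swap1)
qed

lemma scale_fun_vs: "vector_space (scale_fun sc)"
  unfolding vector_space_def module_def scale_fun_def
  by (auto simp: fun_eq_iff scale_right_distrib scale_left_distrib)

lemma sum_fun_apply: "(sum f A) x = sum (\<lambda>a. f a x) A"
  by (induction A rule: infinite_finite_induct) auto

lemma infdim_of_good: "infinite_dimensional (scale_fun sc) (tanaka_prolongation sc br M1 M2)"
proof -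
  interpret F: vector_space "scale_fun sc" by (rule scale_fun_vs)
  have "\<exists>x0 u0. u0 \<in> U \<and> (\<forall>n. (T x0 ^^ n) u0 \<noteq> 0)"
    using g unfolding good_def by simp
  then obtain x0 u0 where u0: "u0 \<in> U" and nz: "\<And>n. (T x0 ^^ n) u0 \<noteq> 0"
    by blast
  define G where "G j = chain T (2 * j) u0" for j
  have ev: "G q (replicate (2 * p) x0) = (if p = q then (T x0 ^^ (2 * q)) u0 else 0)" for p q
  proof (cases "p = q")
    case True then show ?thesis by (simp add: G_def chain_eval)
  next
    case False
    then have "length (replicate (2 * p) x0) \<noteq> 2 * q" "length (replicate (2 * p) x0) \<noteq> Suc (2 * q)" by auto
    then show ?thesis using False chain_support[OF u0] by (simp add: G_def)
  qed
  have Gin: "G j \<in> tanaka_prolongation sc br M1 M2" for j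
    unfolding tanaka_prolongation_def G_def
    by (rule F.span_base) (use chain_tanaka[OF u0, of "2 * j"] in blast)
  have injG: "inj G"
  proof (rule injI)
    fix i j assume "G i = G j"
    then have "G i (replicate (2 * i) x0) = G j (replicate (2 * i) x0)" by simp
    show "i = j"
    proof (rule ccontr)
      assume "i \<noteq> j"
      then have "G j (replicate (2 * i) x0) = 0" using ev[of j i] by simp
      moreover have "G i (replicate (2 * i) x0) \<noteq> 0" using ev[of i i] nz by simp
      ultimately show False using \<open>G i = G j\<close> by simp
    qed
  qed
  have indep: "F.independent (G ` A)" for A
    unfolding F.independent_explicit_finite_subsets
  proof (intro allI impI ballI)
    fix S u v assume S: "S \<subseteq> G ` A" "finite S" and sum0: "(\<Sum>v\<in>S. scale_fun sc (u v) v) = 0" and v: "v \<in> S"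
    obtain i where vi: "v = G i" using S v by auto
    let ?xs = "replicate (2 * i) x0"
    have "0 = (\<Sum>w\<in>S. scale_fun sc (u w) w) ?xs" using sum0 by simp
    also have "\<dots> = (\<Sum>w\<in>S. sc (u w) (w ?xs))" by (simp add: sum_fun_apply scale_fun_def)
    also have "\<dots> = sc (u v) (v ?xs)"
    proof (rule sum.remove[OF S(2) v, THEN trans])
      have "w ?xs = 0" if wS: "w \<in> S - {v}" for w
      proof -
        obtain j where "w = G j" using wS S by auto
        then show ?thesis using wS vi ev[of j i] by auto
      qed
      then have "(\<Sum>w\<in>S - {v}. sc (u w) (w ?xs)) = 0" by (intro sum.neutral) simp
      then show "sc (u v) (v ?xs) + (\<Sum>w\<in>S - {v}. sc (u w) (w ?xs)) = sc (u v) (v ?xs)" by simp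
    qed
    finally have "sc (u v) (v ?xs) = 0" by simp
    moreover have "v ?xs \<noteq> 0" using vi ev[of i i] nz by simp
    ultimately show "u v = 0" by simp
  qed
  show ?thesis unfolding infinite_dimensional_def
  proof
    assume "\<exists>B. finite B \<and> tanaka_prolongation sc br M1 M2 \<subseteq> F.span B"
    then obtain B where B: "finite B" "tanaka_prolongation sc br M1 M2 \<subseteq> F.span B" by blast
    have "G ` {..card B} \<subseteq> F.span B" using Gin B(2) by auto
    from F.independent_span_bound[OF B(1) indep this]
    have "card (G ` {..card B}) \<le> card B" by simp
    moreover have "card (G ` {..card B}) = Suc (card B)"
      using card_image[OF inj_on_subset[OF injG]] by simp
    ultimately show False by simp
  qed
qed

end

definition "E = (SOME p. fst p \<in> M2 \<and> snd p \<in> M2 \<and> fst p \<noteq> snd p \<and> independent {fst p, snd p} \<and> span {fst p, snd p} = M2)"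
definition "e1 = fst E"
definition "e2 = snd E"

lemma E: "e1 \<in> M2 \<and> e2 \<in> M2 \<and> e1 \<noteq> e2 \<and> independent {e1, e2} \<and> span {e1, e2} = M2"
proof -
  obtain B where B: "finite B" "B \<subseteq> M2" "independent B" "span B = M2" "card B = dim M2"
    using basis_subspace_exists[OF sub2] by blast
  then obtain a b where ab: "B = {a, b}" "a \<noteq> b" using dim2 by (auto simp: card_2_iff)
  have "\<exists>p. fst p \<in> M2 \<and> snd p \<in> M2 \<and> fst p \<noteq> snd p \<and> independent {fst p, snd p} \<and> span {fst p, snd p} = M2"
    using B ab by (intro exI[of _ "(a, b)"]) auto
  then show ?thesis unfolding e1_def e2_def E_def by (rule someI_ex)
qed

definition "om1 x y = representation {e1, e2} (br x y) e1"
definition "om2 x y = representation {e1, e2} (br x y) e2"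

lemma br_in_span: "br x y \<in> span {e1, e2}" using E br_M2 by simp

lemma br_om: "br x y = sc (om1 x y) e1 + sc (om2 x y) e2"
proof -
  have "br x y = (\<Sum>b\<in>{e1, e2}. sc (representation {e1, e2} (br x y) b) b)"
    using sum_representation_eq[of "{e1,e2}" "br x y" "{e1,e2}"] E br_in_span by simp
  then show ?thesis using E by (simp add: om1_def om2_def)
qed

lemma om_add_l: "om1 (x + y) z = om1 x z + om1 y z" "om2 (x + y) z = om2 x z + om2 y z"
  using representation_add[of "{e1,e2}" "br y z" "br x z"] E br_in_span
  by (auto simp: om1_def om2_def br_add_l)
lemma om_add_r: "om1 z (x + y) = om1 z x + om1 z y" "om2 z (x + y) = om2 z x + om2 z y"
  using representation_add[of "{e1,e2}" "br z y" "br z x"] E br_in_span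
  by (auto simp: om1_def om2_def br_add_r)
lemma om_scale_l: "om1 (sc c x) z = c * om1 x z" "om2 (sc c x) z = c * om2 x z"
  using representation_scale[of "{e1,e2}" "br x z" c] E br_in_span
  by (auto simp: om1_def om2_def br_scale_l)
lemma om_scale_r: "om1 z (sc c x) = c * om1 z x" "om2 z (sc c x) = c * om2 z x"
  using representation_scale[of "{e1,e2}" "br z x" c] E br_in_span
  by (auto simp: om1_def om2_def br_scale_r)
lemma om_zero: "br x y = 0 \<Longrightarrow> om1 x y = 0" "br x y = 0 \<Longrightarrow> om2 x y = 0"
  by (auto simp: om1_def om2_def representation_zero)

lemma om_M2: "u \<in> M1 \<Longrightarrow> z \<in> M2 \<Longrightarrow> om1 u z = 0" "u \<in> M1 \<Longrightarrow> z \<in> M2 \<Longrightarrow> om2 u z = 0"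
  using om_zero b12 by auto

lemma om_dec: "u \<in> M1 \<Longrightarrow> (\<And>y. y \<in> M1 \<Longrightarrow> P y) \<Longrightarrow> (\<And>y z. P y \<Longrightarrow> z \<in> M2 \<Longrightarrow> P (y + z)) \<Longrightarrow> P x"
  using dec by metis

lemma caseA:
  assumes v: "v \<in> M1" "v \<noteq> 0" and v0: "\<And>y. y \<in> M1 \<Longrightarrow> om1 v y = 0"
  shows "good (span {v}) (\<lambda>x u. sc (om2 v x) u)"
proof -
  have o1: "om1 v y = 0" for y
  proof -
    obtain a b where "a \<in> M1" "b \<in> M2" "y = a + b" using dec by blast
    then show ?thesis using v0 om_M2 v by (simp add: om_add_r)
  qed
  have brv: "br v y = sc (om2 v y) e2" for y using br_om[of v y] o1 by simp
  have sv: "span {v} \<subseteq> M1" using v sub1 by (simp add: span_minimal)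
  obtain y0 where "br v y0 \<noteq> 0" using nd v unfolding non_degenerate_def by blast
  then have y0: "om2 v y0 \<noteq> 0" using brv by auto
  have pw: "((\<lambda>u. sc (om2 v y0) u) ^^ n) v = sc (om2 v y0 ^ n) v" for n
    by (induction n) (simp_all add: mult.commute)
  show ?thesis unfolding good_def
  proof (intro conjI ballI allI)
    show "subspace (span {v})" by simp
    show "span {v} \<subseteq> M1" by (rule sv)
    show "sc (om2 v x) u \<in> span {v}" if "u \<in> span {v}" for x u using that by (rule span_scale)
    show "sc (om2 v x) (u + w) = sc (om2 v x) u + sc (om2 v x) w" for x u w by (simp add: scale_right_distrib)
    show "sc (om2 v x) (sc c u) = sc c (sc (om2 v x) u)" for x u c by (simp add: mult.commute)
    show "sc (om2 v (x + y)) u = sc (om2 v x) u + sc (om2 v y) u" for x y u by (simp add: om_add_r scale_left_distrib)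
    show "sc (om2 v (sc c x)) u = sc c (sc (om2 v x) u)" for x u c by (simp add: om_scale_r)
    show "sc (om2 v x) u = 0" if "x \<in> M2" for x u using om_M2[OF v(1) that] by simp
    show "sc (om2 v x) (sc (om2 v y) u) = sc (om2 v y) (sc (om2 v x) u)" for x y u by (simp add: mult.commute)
    show "br (sc (om2 v x) u) y = br (sc (om2 v y) u) x" if uS: "u \<in> span {v}" for x y u
    proof -
      obtain c where u: "u = sc c v" using uS by (auto simp: span_singleton)
      show ?thesis by (simp add: u br_scale_l brv mult.commute mult.left_commute)
    qed
    show "\<exists>x0 u0. u0 \<in> span {v} \<and> (\<forall>n. ((\<lambda>u. sc (om2 v x0) u) ^^ n) u0 \<noteq> 0)"
      using y0 v by (intro exI[of _ y0] exI[of _ v]) (simp add: pw span_base)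
  qed
qed

lemma dualG:
  assumes S: "subspace S" and Bs: "finite Bs" "Bs \<subseteq> S" "independent Bs" "span Bs = S"
    and gadd: "\<And>b x y. b \<in> Bs \<Longrightarrow> g (x + y) b = g x b + g y b"
    and gsc: "\<And>b c x. b \<in> Bs \<Longrightarrow> g (sc c x) b = c * g x b"
    and ginj: "\<And>u. u \<in> S \<Longrightarrow> (\<forall>b\<in>Bs. g u b = 0) \<Longrightarrow> u = 0"
  shows "\<exists>u\<in>S. \<forall>b\<in>Bs. g u b = f b"
proof -
  define L where "L x = (\<Sum>b\<in>Bs. sc (g x b) b)" for x
  interpret Lh: module_hom sc sc L
    unfolding module_hom_iff
    by (auto simp: module_axioms L_def gadd gsc scale_left_distrib sum.distrib scale_sum_right intro!: sum.cong)
  have injL: "inj_on L (span Bs)"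
    unfolding Lh.inj_on_iff_eq_0[OF subspace_span]
  proof (intro ballI impI)
    fix x assume x: "x \<in> span Bs" "L x = 0"
    have "\<forall>b\<in>Bs. g x b = 0"
      using independentD[OF Bs(3) Bs(1) subset_refl, of "\<lambda>b. g x b"] x(2) by (auto simp: L_def)
    then show "x = 0" using ginj x(1) Bs(4) by auto
  qed
  have iL: "independent (L ` Bs)" by (rule Lh.independent_injective_image[OF Bs(3) injL])
  have cL: "card (L ` Bs) = dim S"
    using card_image[OF inj_on_subset[OF injL span_superset]] basis_card_eq_dim[of Bs S] Bs by simp
  have Lsp: "L x \<in> span Bs" for x
    unfolding L_def by (rule span_sum, rule span_scale, rule span_base) simp
  have LS: "L ` Bs \<subseteq> S"
    using Bs Lsp by auto
  have "S \<subseteq> span (L ` Bs)"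
    using card_eq_dim[OF LS cL] iL Bs(1) by simp
  moreover have t: "(\<Sum>b\<in>Bs. sc (f b) b) \<in> S"
    unfolding Bs(4)[symmetric] by (rule span_sum, rule span_scale, rule span_base) simp
  ultimately obtain x where x: "x \<in> span Bs" "L x = (\<Sum>b\<in>Bs. sc (f b) b)"
    unfolding Lh.span_image by auto
  have "(\<Sum>b\<in>Bs. sc (g x b - f b) b) = L x - (\<Sum>b\<in>Bs. sc (f b) b)"
    by (simp add: L_def scale_left_diff_distrib sum_subtractf)
  also have "\<dots> = 0" using x(2) by simp
  finally have "\<forall>b\<in>Bs. g x b - f b = 0"
    using independentD[OF Bs(3) Bs(1) subset_refl, of "\<lambda>b. g x b - f b"] by auto
  then show ?thesis using x(1) Bs(4) by auto
qed

lemma lin_ext: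
  assumes fa: "\<And>x y. f (x + y) = f x + f y" and fs: "\<And>c x. f (sc c x) = c * f x"
    and ha: "\<And>x y. h (x + y) = h x + h y" and hs: "\<And>c x. h (sc c x) = c * h x"
    and eq: "\<And>b. b \<in> Bs \<Longrightarrow> f b = h b" and y: "y \<in> span Bs"
  shows "f y = h y"
  using y
proof (induction rule: span_induct)
  case step then show ?case by (rule eq)
next
  case base
  have f0: "f 0 = 0" using fs[of 0 0] by simp
  have h0: "h 0 = 0" using hs[of 0 0] by simp
  show ?case by (rule subspaceI) (use f0 h0 fa ha fs hs in auto)
qed

lemma om_central: "z \<in> M2 \<Longrightarrow> om1 x z = 0" "z \<in> M2 \<Longrightarrow> om2 x z = 0"
  using om_zero central_r by auto

lemma om_diff_l: "om1 (x - y) z = om1 x z - om1 y z" "om2 (x - y) z = om2 x z - om2 y z"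
  using om_add_l[of "x - y" y z] by auto

lemma om_zero_l[simp]: "om1 0 z = 0" "om2 0 z = 0" using om_zero by auto

lemma M1_nz: "M1 \<noteq> {0}"
proof
  assume M10: "M1 = {0}"
  have gen: "\<forall>S. subspace S \<and> M1 \<subseteq> S \<and> (\<forall>x\<in>S. \<forall>y\<in>S. br x y \<in> S) \<longrightarrow> S = UNIV"
    using gnla unfolding depth2_gnla_def by blast
  have "{0} = (UNIV :: 'a set)"
    using gen[rule_format, of "{0}"] M10 by simp
  then have "M1 = UNIV" using M10 by simp
  then have "e1 = 0" "e2 = 0" using M10 by auto
  then show False using E by simp
qed

definition "Aop x = (SOME x'. x' \<in> M1 \<and> (\<forall>y\<in>M1. om1 x' y = om2 x y))"

inductive_set Kset :: "('a \<Rightarrow> 'a) set" where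
  Kid: "(\<lambda>x. x) \<in> Kset"
| KA: "P \<in> Kset \<Longrightarrow> (\<lambda>x. Aop (P x)) \<in> Kset"
| Kadd: "P \<in> Kset \<Longrightarrow> Q \<in> Kset \<Longrightarrow> (\<lambda>x. P x + Q x) \<in> Kset"
| Ksc: "P \<in> Kset \<Longrightarrow> (\<lambda>x. sc c (P x)) \<in> Kset"

definition "invsub S \<longleftrightarrow> subspace S \<and> S \<subseteq> M1 \<and> S \<noteq> {0} \<and> (\<forall>x\<in>S. Aop x \<in> S)"
definition "Ud = (SOME S. invsub S \<and> (\<forall>S'. invsub S' \<longrightarrow> dim S \<le> dim S'))"
definition "w0 = (SOME w. w \<in> Ud \<and> w \<noteq> 0)"
definition "z0 = (SOME z. z \<in> M1 \<and> om1 w0 z \<noteq> 0)"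
definition "PP x = (SOME P. P \<in> Kset \<and> (\<forall>u\<in>Ud. om1 (P u) z0 = om1 u x))"

context
  assumes nondeg1: "\<And>v. v \<in> M1 \<Longrightarrow> (\<forall>y\<in>M1. om1 v y = 0) \<Longrightarrow> v = 0"
begin

lemma BM1: "\<exists>B. finite B \<and> B \<subseteq> M1 \<and> independent B \<and> span B = M1"
  using basis_subspace_exists[OF sub1] by metis

lemma A_ex: "\<exists>x'\<in>M1. \<forall>y\<in>M1. om1 x' y = om2 x y"
proof -
  obtain B where B: "finite B" "B \<subseteq> M1" "independent B" "span B = M1" using BM1 by blast
  have "\<exists>u\<in>M1. \<forall>b\<in>B. om1 u b = om2 x b"
  proof (rule dualG[OF sub1 B])
    show "om1 (a + c) b = om1 a b + om1 c b" for a b c by (rule om_add_l)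
    show "om1 (sc c a) b = c * om1 a b" for a b c by (rule om_scale_l)
    show "u = 0" if "u \<in> M1" "\<forall>b\<in>B. om1 u b = 0" for u
    proof (rule nondeg1[OF that(1)], intro ballI)
      fix y assume "y \<in> M1"
      then show "om1 u y = 0"
        using lin_ext[of "om1 u" "\<lambda>_. 0" B y] that(2) B(4) by (simp add: om_add_r om_scale_r)
    qed
  qed
  then obtain u where u: "u \<in> M1" "\<forall>b\<in>B. om1 u b = om2 x b" by blast
  have "\<forall>y\<in>M1. om1 u y = om2 x y"
    using lin_ext[of "om1 u" "om2 x" B] u(2) B(4) by (simp add: om_add_r om_scale_r)
  then show ?thesis using u(1) by blast
qed

lemma Aop: "Aop x \<in> M1" "y \<in> M1 \<Longrightarrow> om1 (Aop x) y = om2 x y"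
proof -
  have "\<exists>x'. x' \<in> M1 \<and> (\<forall>y\<in>M1. om1 x' y = om2 x y)" using A_ex[of x] by blast
  from someI_ex[OF this] show "Aop x \<in> M1" "y \<in> M1 \<Longrightarrow> om1 (Aop x) y = om2 x y"
    unfolding Aop_def by blast+
qed

lemma om1_uniq: "a \<in> M1 \<Longrightarrow> b \<in> M1 \<Longrightarrow> (\<And>y. y \<in> M1 \<Longrightarrow> om1 a y = om1 b y) \<Longrightarrow> a = b"
  using nondeg1[of "a - b"] subspace_diff[OF sub1] by (simp add: om_diff_l)

lemma Aop_add: "Aop (x + y) = Aop x + Aop y"
  by (rule om1_uniq) (simp_all add: Aop subspace_add[OF sub1] om_add_l)
lemma Aop_sc: "Aop (sc c x) = sc c (Aop x)"
  by (rule om1_uniq) (simp_all add: Aop subspace_scale[OF sub1] om_scale_l)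
lemma Aop_0[simp]: "Aop 0 = 0"
  using Aop_sc[of 0 0] by simp

lemma Aop_om: "om1 (Aop x) y = om2 x y"
proof -
  obtain a b where "a \<in> M1" "b \<in> M2" "y = a + b" using dec by blast
  then show ?thesis by (simp add: om_add_r om_central Aop)
qed

lemma K_add: "P \<in> Kset \<Longrightarrow> P (x + y) = P x + P y"
proof (induction arbitrary: x y rule: Kset.induct)
  case (Kadd P Q) then show ?case by (simp add: ac_simps)
qed (simp_all add: Aop_add scale_right_distrib)
lemma K_sc: "P \<in> Kset \<Longrightarrow> P (sc c x) = sc c (P x)"
proof (induction arbitrary: x rule: Kset.induct)
  case (Ksc P d) then show ?case by (simp add: mult.commute)
qed (simp_all add: Aop_sc scale_right_distrib)
lemma K_0: "P \<in> Kset \<Longrightarrow> P 0 = 0" using K_sc[of P 0 0] by simp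

lemma K_inv: "P \<in> Kset \<Longrightarrow> subspace S \<Longrightarrow> (\<forall>x\<in>S. Aop x \<in> S) \<Longrightarrow> x \<in> S \<Longrightarrow> P x \<in> S"
  by (induction arbitrary: x rule: Kset.induct) (simp_all add: subspace_add subspace_scale)

lemma K_commA: "P \<in> Kset \<Longrightarrow> P (Aop x) = Aop (P x)"
  by (induction arbitrary: x rule: Kset.induct) (simp_all add: Aop_add Aop_sc)

lemma K_comm: "P \<in> Kset \<Longrightarrow> Q \<in> Kset \<Longrightarrow> P (Q x) = Q (P x)"
  by (induction arbitrary: x rule: Kset.induct) (simp_all add: K_commA K_add K_sc)

lemma K_comp: "P \<in> Kset \<Longrightarrow> Q \<in> Kset \<Longrightarrow> (\<lambda>x. P (Q x)) \<in> Kset"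
  by (induction rule: Kset.induct) (auto intro: Kset.intros)

lemma K_diff: "P \<in> Kset \<Longrightarrow> Q \<in> Kset \<Longrightarrow> (\<lambda>x. P x - Q x) \<in> Kset"
proof -
  assume "P \<in> Kset" "Q \<in> Kset"
  then have "(\<lambda>x. P x + sc (-1) (Q x)) \<in> Kset" by (intro Kadd Ksc)
  then show ?thesis by simp
qed

lemma invsub_M1: "invsub M1"
  using sub1 M1_nz Aop by (simp add: invsub_def)

lemma Ud: "invsub Ud" "invsub S \<Longrightarrow> dim Ud \<le> dim S"
proof -
  have "\<exists>S. invsub S \<and> dim S = (LEAST d. \<exists>S. invsub S \<and> dim S = d)"
    using LeastI_ex[of "\<lambda>d. \<exists>S. invsub S \<and> dim S = d"] invsub_M1 by blast
  then obtain S0 where S0: "invsub S0" "dim S0 = (LEAST d. \<exists>S. invsub S \<and> dim S = d)" by blast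
  have "invsub S0 \<and> (\<forall>S'. invsub S' \<longrightarrow> dim S0 \<le> dim S')"
    using S0 by (auto intro: Least_le)
  then have "\<exists>S. invsub S \<and> (\<forall>S'. invsub S' \<longrightarrow> dim S \<le> dim S')" by blast
  from someI_ex[OF this] show "invsub Ud" "invsub S \<Longrightarrow> dim Ud \<le> dim S"
    unfolding Ud_def by blast+
qed

lemma Ud_sub: "subspace Ud" "Ud \<subseteq> M1" "Ud \<noteq> {0}" "x \<in> Ud \<Longrightarrow> Aop x \<in> Ud"
  using Ud(1) unfolding invsub_def by blast+

lemma Ud_min: "invsub S \<Longrightarrow> S \<subseteq> Ud \<Longrightarrow> S = Ud"
  using subspace_dim_equal[of S Ud] Ud(2)[of S] Ud_sub(1) unfolding invsub_def by blast

lemma K_U: "P \<in> Kset \<Longrightarrow> x \<in> Ud \<Longrightarrow> P x \<in> Ud"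
  using K_inv Ud_sub by blast

lemma schur: "P \<in> Kset \<Longrightarrow> u \<in> Ud \<Longrightarrow> u \<noteq> 0 \<Longrightarrow> P u = 0 \<Longrightarrow> x \<in> Ud \<Longrightarrow> P x = 0"
proof -
  assume P: "P \<in> Kset" and u: "u \<in> Ud" "u \<noteq> 0" "P u = 0" and x: "x \<in> Ud"
  let ?N = "{y \<in> Ud. P y = 0}"
  have "invsub ?N" unfolding invsub_def
  proof (intro conjI)
    show "subspace ?N"
      by (rule subspaceI) (use Ud_sub(1) P in \<open>auto simp: subspace_0 subspace_add subspace_scale K_add K_sc K_0\<close>)
    show "?N \<subseteq> M1" using Ud_sub(2) by auto
    show "?N \<noteq> {0}" using u by auto
    show "\<forall>y\<in>?N. Aop y \<in> ?N" using P Ud_sub(4) by (simp add: K_commA)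
  qed
  then have "?N = Ud" by (rule Ud_min) auto
  then show "P x = 0" using x by auto
qed

lemma trans_K: "u \<in> Ud \<Longrightarrow> u \<noteq> 0 \<Longrightarrow> x \<in> Ud \<Longrightarrow> \<exists>P\<in>Kset. P u = x"
proof -
  assume u: "u \<in> Ud" "u \<noteq> 0" and x: "x \<in> Ud"
  let ?W = "{P u | P. P \<in> Kset}"
  have "invsub ?W" unfolding invsub_def
  proof (intro conjI)
    show "subspace ?W"
    proof (rule subspaceI)
      show "0 \<in> ?W" using Ksc[OF Kid, of 0] by force
      show "a + b \<in> ?W" if "a \<in> ?W" "b \<in> ?W" for a b
        using that Kadd by fastforce
      show "sc c a \<in> ?W" if "a \<in> ?W" for c a
        using that Ksc by fastforce
    qed
    show "?W \<subseteq> M1" using K_U u Ud_sub(2) by blast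
    show "?W \<noteq> {0}" using u Kid by force
    show "\<forall>y\<in>?W. Aop y \<in> ?W" using KA by fastforce
  qed
  moreover have "?W \<subseteq> Ud" using K_U u by blast
  ultimately have "?W = Ud" by (rule Ud_min)
  then have "x \<in> ?W" using x by simp
  then show ?thesis by blast
qed

lemma w0: "w0 \<in> Ud" "w0 \<noteq> 0"
proof -
  have "\<exists>w. w \<in> Ud \<and> w \<noteq> 0" using Ud_sub(1,3) subspace_0 by blast
  from someI_ex[OF this] show "w0 \<in> Ud" "w0 \<noteq> 0" unfolding w0_def by blast+
qed

lemma z0: "z0 \<in> M1" "om1 w0 z0 \<noteq> 0"
proof -
  have "\<exists>z. z \<in> M1 \<and> om1 w0 z \<noteq> 0" using nondeg1[of w0] w0 Ud_sub(2) by blast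
  from someI_ex[OF this] show "z0 \<in> M1" "om1 w0 z0 \<noteq> 0" unfolding z0_def by blast+
qed

lemma lemZ: "P \<in> Kset \<Longrightarrow> (\<And>u. u \<in> Ud \<Longrightarrow> om1 (P u) z0 = 0) \<Longrightarrow> x \<in> Ud \<Longrightarrow> P x = 0"
proof -
  assume P: "P \<in> Kset" and h: "\<And>u. u \<in> Ud \<Longrightarrow> om1 (P u) z0 = 0" and x: "x \<in> Ud"
  show "P x = 0"
  proof (cases "P w0 = 0")
    case True show ?thesis by (rule schur[OF P w0 True x])
  next
    case False
    obtain Q where Q: "Q \<in> Kset" "Q (P w0) = w0" using trans_K[OF K_U[OF P w0(1)] False w0(1)] by blast
    have "P (Q w0) = w0" using Q K_comm[OF P Q(1)] by simp
    then have "om1 w0 z0 = 0" using h[OF K_U[OF Q(1) w0(1)]] by simp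
    then show ?thesis using z0 by simp
  qed
qed

lemma PP_ex: "\<exists>P\<in>Kset. \<forall>u\<in>Ud. om1 (P u) z0 = om1 u x"
proof -
  obtain B where B: "finite B" "B \<subseteq> Ud" "independent B" "span B = Ud"
    using basis_subspace_exists[OF Ud_sub(1)] by metis
  have "\<forall>b\<in>B. \<exists>P\<in>Kset. P w0 = b" using trans_K[OF w0] B(2) by blast
  then obtain Pb where Pb: "\<And>b. b \<in> B \<Longrightarrow> Pb b \<in> Kset \<and> Pb b w0 = b" by metis
  have swap: "om1 (Pb b (P w0)) z0 = om1 (P b) z0" if "b \<in> B" "P \<in> Kset" for b P
    using Pb[OF that(1)] K_comm[OF that(2), of "Pb b" w0] by simp
  have linP: "om1 (P (a + c)) z0 = om1 (P a) z0 + om1 (P c) z0" "om1 (P (sc d a)) z0 = d * om1 (P a) z0"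
    if "P \<in> Kset" for P a c d
    using that by (simp_all add: K_add K_sc om_add_l om_scale_l)
  have "\<exists>u\<in>Ud. \<forall>b\<in>B. om1 (Pb b u) z0 = om1 b x"
  proof (rule dualG[OF Ud_sub(1) B])
    show "om1 (Pb b (a + c)) z0 = om1 (Pb b a) z0 + om1 (Pb b c) z0" if "b \<in> B" for a b c
      using linP Pb that by blast
    show "om1 (Pb b (sc d a)) z0 = d * om1 (Pb b a) z0" if "b \<in> B" for a b d
      using linP Pb that by blast
    show "u = 0" if u: "u \<in> Ud" "\<forall>b\<in>B. om1 (Pb b u) z0 = 0" for u
    proof -
      obtain Pu where Pu: "Pu \<in> Kset" "Pu w0 = u" using trans_K[OF w0 u(1)] by blast
      have "\<forall>b\<in>B. om1 (Pu b) z0 = 0" using u(2) swap Pu by auto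
      then have "om1 (Pu y) z0 = 0" if "y \<in> Ud" for y
        using lin_ext[of "\<lambda>y. om1 (Pu y) z0" "\<lambda>_. 0" B y] that B(4) linP[OF Pu(1)] by simp
      then show "u = 0" using lemZ[OF Pu(1) _ w0(1)] Pu(2) by simp
    qed
  qed
  then obtain u where u: "u \<in> Ud" "\<forall>b\<in>B. om1 (Pb b u) z0 = om1 b x" by blast
  obtain Pu where Pu: "Pu \<in> Kset" "Pu w0 = u" using trans_K[OF w0 u(1)] by blast
  have "\<forall>b\<in>B. om1 (Pu b) z0 = om1 b x" using u(2) swap Pu by auto
  then have "om1 (Pu y) z0 = om1 y x" if "y \<in> Ud" for y
    using lin_ext[of "\<lambda>y. om1 (Pu y) z0" "\<lambda>y. om1 y x" B y] that B(4) linP[OF Pu(1)]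
    by (simp add: om_add_l om_scale_l)
  then show ?thesis using Pu(1) by blast
qed

lemma PP: "PP x \<in> Kset" "u \<in> Ud \<Longrightarrow> om1 (PP x u) z0 = om1 u x"
proof -
  have "\<exists>P. P \<in> Kset \<and> (\<forall>u\<in>Ud. om1 (P u) z0 = om1 u x)" using PP_ex[of x] by blast
  from someI_ex[OF this] show "PP x \<in> Kset" "u \<in> Ud \<Longrightarrow> om1 (PP x u) z0 = om1 u x"
    unfolding PP_def by blast+
qed

lemma good_B: "good Ud PP"
proof -
  have eqK: "P x = Q x" if "P \<in> Kset" "Q \<in> Kset" "\<And>u. u \<in> Ud \<Longrightarrow> om1 (P u) z0 = om1 (Q u) z0" "x \<in> Ud" for P Q x
  proof -
    have "(\<lambda>y. P y - Q y) x = 0"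
      by (rule lemZ[OF K_diff[OF that(1,2)] _ that(4)]) (simp add: om_diff_l that(3))
    then show ?thesis by simp
  qed
  have sym1: "om1 (PP x u) y = om1 (PP y u) x" if "u \<in> Ud" for x y u
  proof -
    have "om1 (PP x u) y = om1 (PP y (PP x u)) z0" using PP(2)[OF K_U[OF PP(1) that]] by simp
    also have "\<dots> = om1 (PP x (PP y u)) z0" using K_comm[OF PP(1) PP(1)] by simp
    also have "\<dots> = om1 (PP y u) x" using PP(2)[OF K_U[OF PP(1) that]] by simp
    finally show ?thesis .
  qed
  have nzP: "PP z0 v \<noteq> 0" if "v \<in> Ud" "v \<noteq> 0" for v
  proof
    assume "PP z0 v = 0"
    then have "PP z0 w0 = 0" using schur[OF PP(1) that] w0 by blast
    then show False using PP(2)[OF w0(1), of z0] z0 by simp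
  qed
  have pw: "((PP z0) ^^ n) w0 \<in> Ud \<and> ((PP z0) ^^ n) w0 \<noteq> 0" for n
    by (induction n) (auto simp: w0 K_U[OF PP(1)] nzP)
  show ?thesis unfolding good_def
  proof (intro conjI ballI allI)
    show "subspace Ud" "Ud \<subseteq> M1" using Ud_sub by auto
    show "PP x u \<in> Ud" if "u \<in> Ud" for x u using K_U[OF PP(1) that] .
    show "PP x (u + v) = PP x u + PP x v" for x u v using K_add[OF PP(1)] .
    show "PP x (sc c u) = sc c (PP x u)" for x c u using K_sc[OF PP(1)] .
    show "PP (x + y) u = PP x u + PP y u" if "u \<in> Ud" for x y u
      by (rule eqK[OF PP(1) Kadd[OF PP(1) PP(1)] _ that]) (simp add: PP(2) om_add_l om_add_r K_U[OF PP(1)])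
    show "PP (sc c x) u = sc c (PP x u)" if "u \<in> Ud" for c x u
      by (rule eqK[OF PP(1) Ksc[OF PP(1)] _ that]) (simp add: PP(2) om_scale_l om_scale_r K_U[OF PP(1)])
    show "PP x u = 0" if "u \<in> Ud" "x \<in> M2" for x u
      by (rule lemZ[OF PP(1) _ that(1)]) (simp add: PP(2) om_central[OF that(2)])
    show "PP x (PP y u) = PP y (PP x u)" for x y u using K_comm[OF PP(1) PP(1)] .
    show "br (PP x u) y = br (PP y u) x" if u: "u \<in> Ud" for x y u
    proof -
      have Au: "Aop u \<in> Ud" using Ud_sub(4) u .
      have "om2 (PP x u) y = om1 (PP x (Aop u)) y" using Aop_om[of "PP x u" y] K_commA[OF PP(1)] by simp
      also have "\<dots> = om1 (PP y (Aop u)) x" by (rule sym1[OF Au])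
      also have "\<dots> = om2 (PP y u) x" using Aop_om[of "PP y u" x] K_commA[OF PP(1)] by simp
      finally show ?thesis using br_om sym1[OF u, of x y] by metis
    qed
    show "\<exists>x0 u0. u0 \<in> Ud \<and> (\<forall>n. (PP x0 ^^ n) u0 \<noteq> 0)"
      using pw w0 by blast
  qed
qed

end

lemma main: "infinite_dimensional (scale_fun sc) (tanaka_prolongation sc br M1 M2)"
proof (cases "\<exists>v\<in>M1. v \<noteq> 0 \<and> (\<forall>y\<in>M1. om1 v y = 0)")
  case True
  then obtain v where "v \<in> M1" "v \<noteq> 0" "\<forall>y\<in>M1. om1 v y = 0" by blast
  then show ?thesis using infdim_of_good[OF caseA] by blast
next
  case False
  then have "\<And>v. v \<in> M1 \<Longrightarrow> (\<forall>y\<in>M1. om1 v y = 0) \<Longrightarrow> v = 0" by blast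
  then show ?thesis using infdim_of_good[OF good_B] by blast
qed

end

theorem mainTheorem6:
  fixes sc :: "'k::field_char_0 \<Rightarrow> 'a::ab_group_add \<Rightarrow> 'a"
    and br :: "'a \<Rightarrow> 'a \<Rightarrow> 'a"
    and M1 M2 :: "'a set"
  assumes "depth2_gnla sc br M1 M2"
    and "non_degenerate br M1"
    and "vector_space.dim sc M2 = 2"
  shows "infinite_dimensional (scale_fun sc) (tanaka_prolongation sc br M1 M2)"
proof -
  interpret setting sc br M1 M2 using assms by (unfold_locales)
  show ?thesis by (rule main)
qed

end
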